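(* Let $\operatorname{R}_3=\{a_0,a_1,a_2\}$ be the dihedral quandle of order $3$, with $a_ia_j=a_{2j-i \pmod 3}$. Then the set of non-zero idempotents of $\mathbb{Z}[\operatorname{R}_3]$ is $I(\mathbb{Z}[\operatorname{R}_3])=\{a_0,a_1,a_2\}$.
   Context: For a quandle $Q$, the quandle ring $\mathbb{Z}[Q]$ is the free abelian group with basis $Q$, with multiplication $\big(\sum_i\alpha_i q_i\big)\big(\sum_j\beta_j q_j\big)=\sum_{i,j}\alpha_i\beta_j (q_iq_j)$. $I(\mathbb{Z}[Q])$ denotes the set of non-zero elements $w$ with $w^2=w$. *)

theory Defs
  imports Main
begin

datatype R3 = A0 | A1 | A2

definition r3_idx :: "R3 \<Rightarrow> int" where
  "r3_idx x = (case x of A0 \<Rightarrow> 0 | A1 \<Rightarrow> 1 | A2 \<Rightarrow> 2)"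

definition r3_of :: "int \<Rightarrow> R3" where
  "r3_of k = (if k mod 3 = 0 then A0 else if k mod 3 = 1 then A1 else A2)"

definition r3_op :: "R3 \<Rightarrow> R3 \<Rightarrow> R3" where
  "r3_op x y = r3_of (2 * r3_idx y - r3_idx x)"

(* The quandle ring Z[R_3]: since R_3 is finite, the free abelian group with basis R_3
   is the group of all functions R_3 \<Rightarrow> int (coefficient vectors). *)
type_synonym zr3 = "R3 \<Rightarrow> int"

definition basis :: "R3 \<Rightarrow> zr3" where
  "basis q = (\<lambda>x. if x = q then 1 else 0)"

(* (sum_i alpha_i q_i)(sum_j beta_j q_j) = sum_{i,j} alpha_i beta_j (q_i q_j) *)
definition qmult :: "zr3 \<Rightarrow> zr3 \<Rightarrow> zr3" where
  "qmult u v = (\<lambda>k. \<Sum>p\<in>{(x, y). r3_op x y = k}. u (fst p) * v (snd p))"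

definition nonzero_idempotents :: "zr3 set" where
  "nonzero_idempotents = {w. w \<noteq> (\<lambda>_. 0) \<and> qmult w w = w}"

end

theory Submission
  imports Defs
begin

lemma R3_all: "(x::R3) = A0 \<or> x = A1 \<or> x = A2"
  by (cases x) auto

lemma ops: "r3_op A0 A0 = A0" "r3_op A1 A1 = A1" "r3_op A2 A2 = A2"
  "r3_op A0 A1 = A2" "r3_op A1 A0 = A2" "r3_op A0 A2 = A1" "r3_op A2 A0 = A1"
  "r3_op A1 A2 = A0" "r3_op A2 A1 = A0"
  by (simp_all add: r3_op_def r3_of_def r3_idx_def)

lemma set0: "{(x, y). r3_op x y = A0} = {(A0,A0),(A1,A2),(A2,A1)}"
  apply (rule set_eqI) apply (case_tac x) apply (rename_tac a b) apply (case_tac a; case_tac b; simp add: ops) done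
lemma set1: "{(x, y). r3_op x y = A1} = {(A1,A1),(A0,A2),(A2,A0)}"
  apply (rule set_eqI) apply (case_tac x) apply (rename_tac a b) apply (case_tac a; case_tac b; simp add: ops) done
lemma set2: "{(x, y). r3_op x y = A2} = {(A2,A2),(A0,A1),(A1,A0)}"
  apply (rule set_eqI) apply (case_tac x) apply (rename_tac a b) apply (case_tac a; case_tac b; simp add: ops) done

lemma qm0: "qmult w w A0 = w A0 * w A0 + 2 * w A1 * w A2"
  by (simp add: qmult_def set0)
lemma qm1: "qmult w w A1 = w A1 * w A1 + 2 * w A0 * w A2"
  by (simp add: qmult_def set1)
lemma qm2: "qmult w w A2 = w A2 * w A2 + 2 * w A0 * w A1"
  by (simp add: qmult_def set2)

lemma int_sys:
  fixes x y z :: int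
  assumes e0: "x*x + 2*y*z = x" and e1: "y*y + 2*x*z = y" and e2: "z*z + 2*x*y = z"
  shows "(x=0\<and>y=0\<and>z=0) \<or> (x=1\<and>y=0\<and>z=0) \<or> (x=0\<and>y=1\<and>z=0) \<or> (x=0\<and>y=0\<and>z=1)"
proof -
  have "(x+y+z)*(x+y+z) = (x*x + 2*y*z) + (y*y + 2*x*z) + (z*z + 2*x*y)"
    by (simp add: algebra_simps)
  also have "\<dots> = x+y+z" using e0 e1 e2 by simp
  finally have "(x+y+z)*(x+y+z) = x+y+z" .
  hence "(x+y+z)*(x+y+z-1) = 0" by (simp add: algebra_simps)
  hence s: "x+y+z = 0 \<or> x+y+z = 1" by auto
  have "(x-y)*(x+y-2*z-1) = (x*x + 2*y*z) - (y*y + 2*x*z) - (x - y)" by (simp add: algebra_simps)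
  hence f01: "(x-y)*(x+y-2*z-1) = 0" using e0 e1 by simp
  have "(y-z)*(y+z-2*x-1) = (y*y + 2*x*z) - (z*z + 2*x*y) - (y - z)" by (simp add: algebra_simps)
  hence f12: "(y-z)*(y+z-2*x-1) = 0" using e1 e2 by simp
  have "(x-z)*(x+z-2*y-1) = (x*x + 2*y*z) - (z*z + 2*x*y) - (x - z)" by (simp add: algebra_simps)
  hence f02: "(x-z)*(x+z-2*y-1) = 0" using e0 e2 by simp
  show ?thesis
  proof (cases "x+y+z = 0")
    case True
    have "x+y-2*z-1 \<noteq> 0" using True by presburger
    hence "x = y" using f01 by simp
    moreover have "y+z-2*x-1 \<noteq> 0" using True by presburger
    hence "y = z" using f12 by simp
    ultimately show ?thesis using True by auto
  next
    case False
    with s have T: "x+y+z = 1" by auto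
    have "x+y-2*z-1 = -3*z" using T by simp
    hence a: "x = y \<or> z = 0" using f01 T by (simp, arith)
    have "y+z-2*x-1 = -3*x" using T by simp
    hence b: "y = z \<or> x = 0" using f12 T by (simp, arith)
    have "x+z-2*y-1 = -3*y" using T by simp
    hence c: "x = z \<or> y = 0" using f02 T by (simp, arith)
    have sq: "\<And>t::int. t*t = t \<Longrightarrow> t = 0 \<or> t = 1"
      by (metis mult_cancel_right2 mult_eq_0_iff)
    show ?thesis
    proof (cases "x = y \<and> y = z")
      case True thus ?thesis using T by presburger
    next
      case False
      then consider "z = 0" | "x = 0" | "y = 0" using a b c by blast
      thus ?thesis
      proof cases
        case 1 thus ?thesis using e0 e1 T sq by auto
      next
        case 2 thus ?thesis using e1 e2 T sq by auto
      next
        case 3 thus ?thesis using e0 e2 T sq by auto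
      qed
    qed
  qed
qed

lemma fun_eq3: "(f::R3 \<Rightarrow> int) = g \<longleftrightarrow> f A0 = g A0 \<and> f A1 = g A1 \<and> f A2 = g A2"
proof
  assume "f A0 = g A0 \<and> f A1 = g A1 \<and> f A2 = g A2"
  thus "f = g" by (intro ext, case_tac x) auto
qed simp

theorem proposition4p3:
  shows "nonzero_idempotents = {basis A0, basis A1, basis A2}"
proof (rule set_eqI)
  fix w :: zr3
  define x where "x = w A0"
  define y where "y = w A1"
  define z where "z = w A2"
  have E1: "qmult w w = w \<longleftrightarrow> x * x + 2 * y * z = x \<and>
      y * y + 2 * x * z = y \<and> z * z + 2 * x * y = z"
    unfolding x_def y_def z_def by (simp only: fun_eq3 qm0 qm1 qm2)
  have E2: "w \<noteq> (\<lambda>_. 0) \<longleftrightarrow> \<not> (x = 0 \<and> y = 0 \<and> z = 0)"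
    unfolding x_def y_def z_def by (simp only: fun_eq3)
  have E3: "w \<in> {basis A0, basis A1, basis A2} \<longleftrightarrow>
     (x = 1 \<and> y = 0 \<and> z = 0) \<or> (x = 0 \<and> y = 1 \<and> z = 0) \<or> (x = 0 \<and> y = 0 \<and> z = 1)"
    unfolding x_def y_def z_def by (simp add: fun_eq3 basis_def)
  have E4: "w \<in> nonzero_idempotents \<longleftrightarrow> w \<noteq> (\<lambda>_. 0) \<and> qmult w w = w"
    by (simp add: nonzero_idempotents_def)
  show "w \<in> nonzero_idempotents \<longleftrightarrow> w \<in> {basis A0, basis A1, basis A2}"
    unfolding E4 E1 E2 E3
  proof
    assume "\<not> (x = 0 \<and> y = 0 \<and> z = 0) \<and> (x * x + 2 * y * z = x \<and>
      y * y + 2 * x * z = y \<and> z * z + 2 * x * y = z)"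
    thus "(x = 1 \<and> y = 0 \<and> z = 0) \<or> (x = 0 \<and> y = 1 \<and> z = 0) \<or> (x = 0 \<and> y = 0 \<and> z = 1)"
      using int_sys[of x y z] by blast
  next
    assume "(x = 1 \<and> y = 0 \<and> z = 0) \<or> (x = 0 \<and> y = 1 \<and> z = 0) \<or> (x = 0 \<and> y = 0 \<and> z = 1)"
    thus "\<not> (x = 0 \<and> y = 0 \<and> z = 0) \<and> (x * x + 2 * y * z = x \<and>
      y * y + 2 * x * z = y \<and> z * z + 2 * x * y = z)" by auto
  qed
qed

end
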